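(* If $n$ is even, then there exists a line spread $\mathcal F$ of $\mathrm{PG}(2n-1,q)$ such that every line of $\mathcal F$ is scattered with respect to the Desarguesian spread $\mathcal S$, i.e. meets every element of $\mathcal S$ in at most one point.
   Context: Let $q$ be a prime power, $n>1$ an integer, $F=\mathbb F_q\subset M=\mathbb F_{q^n}\subset L=\mathbb F_{q^{2n}}$. Regard $L$ as a $2n$-dimensional $F$-vector space; $\mathrm{PG}(2n-1,q)$ has as points the subspaces $Fz$, $z\in L^*$, and lines the 2-dimensional $F$-subspaces. $\mathcal S$ is the Desarguesian spread of $(n-1)$-subspaces of $\mathrm{PG}(2n-1,q)$ consisting of the projective subspaces determined by the one-dimensional $M$-subspaces $Mz$, $z\in L^*$. A line spread is a set of lines partitioning the point set. A set of points is scattered with respect to a spread if it meets each spread element in at most one point. *)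

theory Defs
  imports Main
begin

definition is_subfield :: "'a::field set \<Rightarrow> bool" where
  "is_subfield K \<longleftrightarrow> 0 \<in> K \<and> 1 \<in> K \<and>
     (\<forall>x\<in>K. \<forall>y\<in>K. x + y \<in> K \<and> x * y \<in> K) \<and>
     (\<forall>x\<in>K. - x \<in> K \<and> inverse x \<in> K)"

definition mults :: "'a::field set \<Rightarrow> 'a \<Rightarrow> 'a set" where
  "mults K z = {c * z | c. c \<in> K}"

text \<open>Points of PG(2n-1,q): the subspaces Fz with z nonzero.\<close>
definition is_point :: "'a::field set \<Rightarrow> 'a set \<Rightarrow> bool" where
  "is_point F P \<longleftrightarrow> (\<exists>z. z \<noteq> 0 \<and> P = mults F z)"

definition is_line :: "'a::field set \<Rightarrow> 'a set \<Rightarrow> bool" where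
  "is_line F l \<longleftrightarrow> (\<exists>x y. l = {a * x + b * y | a b. a \<in> F \<and> b \<in> F} \<and>
       (\<forall>a\<in>F. \<forall>b\<in>F. a * x + b * y = 0 \<longrightarrow> a = 0 \<and> b = 0))"

definition line_spread :: "'a::field set \<Rightarrow> 'a set set \<Rightarrow> bool" where
  "line_spread F S \<longleftrightarrow> (\<forall>l\<in>S. is_line F l) \<and>
     (\<forall>P. is_point F P \<longrightarrow> (\<exists>!l. l \<in> S \<and> P \<subseteq> l))"

definition desarg_elem :: "'a::field set \<Rightarrow> 'a set \<Rightarrow> bool" where
  "desarg_elem M E \<longleftrightarrow> (\<exists>z. z \<noteq> 0 \<and> E = mults M z)"

definition scattered_line :: "'a::field set \<Rightarrow> 'a::field set \<Rightarrow> 'a set \<Rightarrow> bool" where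
  "scattered_line F M l \<longleftrightarrow> (\<forall>E. desarg_elem M E \<longrightarrow>
     (\<forall>P Q. is_point F P \<and> P \<subseteq> l \<and> P \<subseteq> E \<and>
            is_point F Q \<and> Q \<subseteq> l \<and> Q \<subseteq> E \<longrightarrow> P = Q))"

end

theory Submission
  imports Defs "HOL-Number_Theory.Number_Theory" "HOL-Computational_Algebra.Polynomial"
begin

lemma char_prime: "prime CHAR('a::{field,finite})"
  by (rule prime_CHAR_semidom) (simp add: finite_imp_CHAR_pos)

definition addsub :: "'a::field set \<Rightarrow> bool" where
  "addsub B \<longleftrightarrow> 0 \<in> B \<and> (\<forall>x\<in>B. \<forall>y\<in>B. x + y \<in> B) \<and> (\<forall>x\<in>B. -x \<in> B)"

lemma addsub_ofnat:
  assumes "addsub B" "x \<in> B" shows "of_nat m * x \<in> B"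
  using assms by (induction m) (auto simp: addsub_def distrib_right)

lemma ofnat_mod_char: "(of_nat (k mod CHAR('a)) :: 'a::semiring_1_cancel) = of_nat k"
  by (simp add: of_nat_eq_iff_cong_CHAR cong_def)

lemma addsub_step:
  fixes B :: "'a::{field,finite} set"
  assumes B: "addsub B" and v: "v \<notin> B"
  defines "p \<equiv> CHAR('a)"
  defines "B' \<equiv> (\<lambda>(b,k). b + of_nat k * v) ` (B \<times> {..<p})"
  shows "addsub B'" "card B' = card B * p" "v \<in> B'" "B \<subseteq> B'"
proof -
  have pp: "prime p" unfolding p_def by (rule char_prime)
  hence p2: "p \<ge> 2" by (simp add: prime_ge_2_nat)
  have B0: "0 \<in> B" using B by (simp add: addsub_def)
  show "v \<in> B'" unfolding B'_def using B0 p2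
    by (auto intro!: image_eqI[of _ _ "(0, 1)"])
  show "B \<subseteq> B'" unfolding B'_def using p2
    by (auto intro!: image_eqI[of _ _ "(b, 0)" for b])
  show "addsub B'"
    unfolding addsub_def
  proof (intro conjI ballI)
    show "0 \<in> B'" unfolding B'_def using B0 p2 by (auto intro!: image_eqI[of _ _ "(0, 0)"])
  next
    fix x y assume "x \<in> B'" "y \<in> B'"
    then obtain b k b' k' where x: "x = b + of_nat k * v" "b \<in> B" "k < p"
      and y: "y = b' + of_nat k' * v" "b' \<in> B" "k' < p"
      unfolding B'_def by auto
    have "x + y = (b + b') + of_nat ((k + k') mod p) * v"
      using x y unfolding p_def by (simp add: ofnat_mod_char algebra_simps)
    moreover have "b + b' \<in> B" using B x y by (auto simp: addsub_def)
    moreover have "(k + k') mod p < p" using p2 by simp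
    ultimately show "x + y \<in> B'" unfolding B'_def by (auto intro!: image_eqI[of _ _ "(b + b', (k+k') mod p)"])
  next
    fix x assume "x \<in> B'"
    then obtain b k where x: "x = b + of_nat k * v" "b \<in> B" "k < p"
      unfolding B'_def by auto
    have "(of_nat ((p - k) mod p) :: 'a) = of_nat (p - k)" unfolding p_def by (simp add: ofnat_mod_char)
    also have "\<dots> = - of_nat k" using x(3) unfolding p_def by (simp add: of_nat_diff)
    finally have "-x = (-b) + of_nat ((p - k) mod p) * v" using x by simp
    moreover have "-b \<in> B" using B x by (auto simp: addsub_def)
    moreover have "(p - k) mod p < p" using p2 by simp
    ultimately show "-x \<in> B'" unfolding B'_def by (auto intro!: image_eqI[of _ _ "(-b, (p-k) mod p)"])
  qed
  have inj: "inj_on (\<lambda>(b,k). b + of_nat k * v) (B \<times> {..<p})"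
  proof (rule inj_onI, clarsimp)
    fix b k b' k' assume b: "b \<in> B" "b' \<in> B" and k: "k < p" "k' < p"
      and eq: "b + of_nat k * v = b' + of_nat k' * v"
    have main: "k = k'" if "b + of_nat k * v = b' + of_nat k' * v" "b \<in> B" "b' \<in> B" "k < p" "k' < p" "k' \<le> k"
      for b b' k k'
    proof (rule ccontr)
      assume "k \<noteq> k'"
      define d where "d = k - k'"
      have d: "0 < d" "d < p" using that \<open>k \<noteq> k'\<close> by (auto simp: d_def)
      have "coprime d p" using d pp
        by (metis coprime_commute nat_dvd_not_less prime_imp_coprime)
      then obtain m where m: "[d * m = Suc 0] (mod p)" using cong_solve_coprime_nat by blast
      have dm: "(of_nat (d * m) :: 'a) = 1" using m unfolding p_def
        by (metis of_nat_1 of_nat_eq_iff_cong_CHAR One_nat_def)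
      have "of_nat d * v = b' - b" using that unfolding d_def by (simp add: of_nat_diff algebra_simps)
      moreover have "b' - b \<in> B" using B that unfolding addsub_def by (metis diff_conv_add_uminus)
      ultimately have "of_nat m * (of_nat d * v) \<in> B" using addsub_ofnat[OF B] by metis
      also have "of_nat m * (of_nat d * v) = of_nat (d * m) * v" by (simp add: algebra_simps)
      finally show False using dm v by simp
    qed
    have "k = k'"
    proof (cases "k' \<le> k")
      case True thus ?thesis using main[OF eq b k] by simp
    next
      case False thus ?thesis using main[OF eq[symmetric] b(2) b(1) k(2) k(1)] by simp
    qed
    thus "b = b' \<and> k = k'" using eq by simp
  qed
  show "card B' = card B * p" unfolding B'_def
    by (subst card_image[OF inj]) (simp add: card_cartesian_product)
qed

lemma addsub_card_power:
  fixes A :: "'a::{field,finite} set"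
  assumes A: "addsub A"
  shows "\<exists>e. card A = CHAR('a) ^ e"
proof -
  have "\<exists>e. card A = CHAR('a) ^ e" if "addsub B" "B \<subseteq> A" "card B = CHAR('a) ^ j" for B j
    using that
  proof (induction "card A - card B" arbitrary: B j rule: less_induct)
    case less
    show ?case
    proof (cases "B = A")
      case True thus ?thesis using less by auto
    next
      case False then obtain v where v: "v \<in> A" "v \<notin> B" using less by auto
      define B' where "B' \<equiv> (\<lambda>(b,k). b + of_nat k * v) ` (B \<times> {..<CHAR('a)})"
      note st = addsub_step[OF less(2) v(2), folded B'_def]
      have "B' \<subseteq> A" unfolding B'_def using less(3) addsub_ofnat[OF A v(1)] A
        by (auto simp: addsub_def)
      hence le: "card B' \<le> card A" by (simp add: card_mono)
      have p2: "CHAR('a) \<ge> 2" using char_prime[where 'a='a] by (simp add: prime_ge_2_nat)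
      have "card B > 0" using less(2) by (auto simp: addsub_def card_gt_0_iff)
      hence "card B < card B'" using st(2) p2 by simp
      hence "card A - card B' < card A - card B" using le by linarith
      from less(1)[OF this st(1) \<open>B' \<subseteq> A\<close>, of "Suc j"] show ?thesis
        using st(2) less(4) by (simp add: mult.commute)
    qed
  qed
  from this[of "{0}" 0] A show ?thesis by (auto simp: addsub_def)
qed



context fixes K :: "'a::field set" assumes K: "is_subfield K"
begin
lemma sf0: "0 \<in> K" and sf1: "1 \<in> K" using K by (auto simp: is_subfield_def)
lemma sfadd: "x \<in> K \<Longrightarrow> y \<in> K \<Longrightarrow> x + y \<in> K" using K by (auto simp: is_subfield_def)
lemma sfmult: "x \<in> K \<Longrightarrow> y \<in> K \<Longrightarrow> x * y \<in> K" using K by (auto simp: is_subfield_def)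
lemma sfneg: "x \<in> K \<Longrightarrow> - x \<in> K" using K by (auto simp: is_subfield_def)
lemma sfinv: "x \<in> K \<Longrightarrow> inverse x \<in> K" using K by (auto simp: is_subfield_def)
lemma sfdiff: "x \<in> K \<Longrightarrow> y \<in> K \<Longrightarrow> x - y \<in> K" using sfadd sfneg by (metis diff_conv_add_uminus)
lemma sfdiv: "x \<in> K \<Longrightarrow> y \<in> K \<Longrightarrow> x / y \<in> K" using sfmult sfinv by (metis divide_inverse)
lemma sfpow: "x \<in> K \<Longrightarrow> x ^ m \<in> K" by (induction m) (auto simp: sf1 sfmult)
lemma sf_addsub: "addsub K" using sf0 sfadd sfneg by (auto simp: addsub_def)

lemma sf_power_card:
  assumes fin: "finite K" and x: "x \<in> K"
  shows "x ^ card K = x"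
proof (cases "x = 0")
  case True
  have "card K > 0" using fin sf0 card_gt_0_iff by blast
  thus ?thesis using True by simp
next
  case False
  have fin': "finite (K - {0})" using fin by simp
  have "(\<Prod>y\<in>K-{0}. x * y) = (\<Prod>y\<in>K-{0}. y)"
    by (rule prod.reindex_bij_witness[of _ "\<lambda>y. y / x" "\<lambda>y. x * y"])
       (use False x in \<open>auto simp: sfdiv sfmult\<close>)
  moreover have "(\<Prod>y\<in>K-{0}. x * y) = x ^ card (K - {0}) * (\<Prod>y\<in>K-{0}. y)"
    by (simp add: prod.distrib)
  moreover have "(\<Prod>y\<in>K-{0}. y) \<noteq> 0" using fin' by simp
  ultimately have "x ^ card (K - {0}) = 1" by simp
  moreover have "card K = Suc (card (K - {0}))" using fin sf0
    by (metis card_Suc_Diff1)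
  ultimately show ?thesis by simp
qed

lemma sf_power_card_iter:
  assumes fin: "finite K" and x: "x \<in> K"
  shows "x ^ (card K ^ j) = x"
proof (induction j)
  case (Suc j)
  have "x ^ (card K ^ Suc j) = (x ^ card K) ^ (card K ^ j)" by (simp add: power_mult)
  thus ?case using Suc sf_power_card[OF fin x] by simp
qed simp
end

lemma frob_add:
  fixes x y :: "'a::{field,finite}"
  assumes "card F = CHAR('a) ^ e"
  shows "(x + y) ^ (card F ^ j) = x ^ (card F ^ j) + y ^ (card F ^ j)"
proof -
  have "prime CHAR('a)" by (rule char_prime)
  from freshmans_dream'[OF this, of "card F ^ j" "e * j"] assms show ?thesis by (simp add: power_mult)
qed

lemma roots_card:
  assumes q: "q \<ge> 2"
  shows "card {x::'a::field. x ^ q = x} \<le> q"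
proof -
  define P :: "'a poly" where "P = monom 1 q + [:0, -1:]"
  have dP: "degree P = q" unfolding P_def
    using q by (subst degree_add_eq_left) (auto simp: degree_monom_eq)
  hence "P \<noteq> 0" using q by auto
  from card_poly_roots_bound[OF this] dP have "card {x. poly P x = 0} \<le> q" by simp
  moreover have "poly P x = x ^ q - x" for x unfolding P_def by (simp add: poly_monom)
  ultimately show ?thesis by simp
qed

lemma fix_in_sf:
  fixes F :: "'a::{field,finite} set"
  assumes F: "is_subfield F" and q2: "card F \<ge> 2" and x: "x ^ card F = x"
  shows "x \<in> F"
proof -
  have "F \<subseteq> {x. x ^ card F = x}" using sf_power_card[OF F] by auto
  moreover have "card {x::'a. x ^ card F = x} \<le> card F" using roots_card[OF q2] by blast
  ultimately have "F = {x. x ^ card F = x}"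
    by (metis (no_types, lifting) antisym card_mono card_subset_eq finite)
  thus ?thesis using x by auto
qed



lemma spread_from_T:
  fixes F M :: "'a::field set" and T :: "'a \<Rightarrow> 'a" and t s :: 'a
  assumes F: "is_subfield F" and M: "is_subfield M" and FM: "F \<subseteq> M"
    and tF: "t \<in> F" and sF: "s \<in> F"
    and Tadd: "\<And>u v. T (u + v) = T u + T v"
    and Thom: "\<And>a u. a \<in> F \<Longrightarrow> T (a * u) = a * T u"
    and Tsq: "\<And>u. T (T u) = t * T u + s * u"
    and irr: "\<And>a. a \<in> F \<Longrightarrow> a * a - t * a - s \<noteq> 0"
    and noeig: "\<And>m u. m \<in> M \<Longrightarrow> u \<noteq> 0 \<Longrightarrow> T u \<noteq> m * u"
  shows "\<exists>S. line_spread F S \<and> (\<forall>l\<in>S. scattered_line F M l)"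
proof -
  define ln where "ln v = {a * v + b * T v | a b. a \<in> F \<and> b \<in> F}" for v
  have Tlin: "T (a * u + b * w) = a * T u + b * T w" if "a \<in> F" "b \<in> F" for a b u w
    using that by (simp add: Tadd Thom)
  have indep: "a = 0 \<and> b = 0" if "v \<noteq> 0" "a \<in> F" "b \<in> F" "a * v + b * T v = 0" for v a b
  proof (cases "b = 0")
    case True thus ?thesis using that by simp
  next
    case False
    have "T v = (- a / b) * v" using that False by (simp add: field_simps add_eq_0_iff)
    moreover have "- a / b \<in> M" using FM that sfdiv[OF F] sfneg[OF F] by blast
    ultimately show ?thesis using noeig that by blast
  qed
  have self: "v \<in> ln v" for v
  proof -
    have "v = 1 * v + 0 * T v" by simp
    thus ?thesis unfolding ln_def using sf0[OF F] sf1[OF F] by blast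
  qed
  have same: "ln w = ln v" if v: "v \<noteq> 0" and w: "w \<in> ln v" "w \<noteq> 0" for v w
  proof -
    obtain \<alpha> \<beta> where ab: "\<alpha> \<in> F" "\<beta> \<in> F" "w = \<alpha> * v + \<beta> * T v" using w unfolding ln_def by auto
    have Tw: "T w = (\<beta> * s) * v + (\<alpha> + \<beta> * t) * T v"
      using ab by (simp add: Tlin Tsq algebra_simps)
    define D where "D = \<alpha> * \<alpha> + \<alpha> * \<beta> * t - s * \<beta> * \<beta>"
    have D: "D \<noteq> 0"
    proof (cases "\<beta> = 0")
      case True
      then have "\<alpha> \<noteq> 0" using ab w by auto
      thus ?thesis using True by (simp add: D_def)
    next
      case False
      have "- \<alpha> / \<beta> \<in> F" using ab sfdiv[OF F] sfneg[OF F] by blast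
      from irr[OF this] have "(- \<alpha> / \<beta>) * (- \<alpha> / \<beta>) - t * (- \<alpha> / \<beta>) - s \<noteq> 0" .
      moreover have "D = \<beta> * \<beta> * ((- \<alpha> / \<beta>) * (- \<alpha> / \<beta>) - t * (- \<alpha> / \<beta>) - s)"
        using False by (simp add: D_def field_simps)
      ultimately show ?thesis using False by simp
    qed
    show ?thesis
    proof
      show "ln w \<subseteq> ln v"
      proof
        fix x assume "x \<in> ln w"
        then obtain \<gamma> \<delta> where gd: "\<gamma> \<in> F" "\<delta> \<in> F" "x = \<gamma> * w + \<delta> * T w" unfolding ln_def by auto
        have "x = (\<gamma> * \<alpha> + \<delta> * \<beta> * s) * v + (\<gamma> * \<beta> + \<delta> * \<alpha> + \<delta> * \<beta> * t) * T v"
          using gd ab Tw by (simp add: algebra_simps)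
        moreover have "\<gamma> * \<alpha> + \<delta> * \<beta> * s \<in> F" "\<gamma> * \<beta> + \<delta> * \<alpha> + \<delta> * \<beta> * t \<in> F"
          using gd ab tF sF by (simp_all add: sfadd[OF F] sfmult[OF F])
        ultimately show "x \<in> ln v" unfolding ln_def by blast
      qed
    next
      show "ln v \<subseteq> ln w"
      proof
        fix x assume "x \<in> ln v"
        then obtain \<gamma> \<delta> where gd: "\<gamma> \<in> F" "\<delta> \<in> F" "x = \<gamma> * v + \<delta> * T v" unfolding ln_def by auto
        have key: "D * (\<gamma> * v + \<delta> * T v) = (\<gamma> * (\<alpha> + \<beta> * t) - \<delta> * \<beta> * s) * w + (\<delta> * \<alpha> - \<gamma> * \<beta>) * T w"
          unfolding Tw unfolding ab(3) D_def by (simp add: algebra_simps)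
        have "x = inverse D * (D * (\<gamma> * v + \<delta> * T v))" using D gd by simp
        also note key
        finally have "x = ((\<gamma> * (\<alpha> + \<beta> * t) - \<delta> * \<beta> * s) / D) * w + ((\<delta> * \<alpha> - \<gamma> * \<beta>) / D) * T w"
          by (simp add: divide_inverse algebra_simps)
        moreover have "(\<gamma> * (\<alpha> + \<beta> * t) - \<delta> * \<beta> * s) / D \<in> F" "(\<delta> * \<alpha> - \<gamma> * \<beta>) / D \<in> F"
          using gd ab tF sF unfolding D_def
          by (simp_all add: sfadd[OF F] sfmult[OF F] sfdiff[OF F] sfdiv[OF F])
        ultimately show "x \<in> ln w" unfolding ln_def by blast
      qed
    qed
  qed
  define S where "S = {ln v | v. v \<noteq> 0}"
  have lines: "is_line F l" if "l \<in> S" for l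
  proof -
    obtain v where v: "v \<noteq> 0" "l = ln v" using \<open>l \<in> S\<close> unfolding S_def by auto
    have "l = {a * v + b * T v | a b. a \<in> F \<and> b \<in> F}" using v(2) by (simp add: ln_def)
    moreover have "\<forall>a\<in>F. \<forall>b\<in>F. a * v + b * T v = 0 \<longrightarrow> a = 0 \<and> b = 0" using indep v(1) by blast
    ultimately show ?thesis unfolding is_line_def by blast
  qed
  have multsF_sub: "mults F z \<subseteq> ln v \<longleftrightarrow> z \<in> ln v" for z v
  proof
    have "z = 1 * z" by simp
    hence "z \<in> mults F z" unfolding mults_def using sf1[OF F] by blast
    moreover assume "mults F z \<subseteq> ln v"
    ultimately show "z \<in> ln v" by blast
  next
    assume "z \<in> ln v"
    then obtain a b where ab: "a \<in> F" "b \<in> F" "z = a * v + b * T v" unfolding ln_def by auto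
    show "mults F z \<subseteq> ln v"
    proof
      fix x assume "x \<in> mults F z"
      then obtain c where c: "c \<in> F" "x = c * z" unfolding mults_def by auto
      have "x = (c * a) * v + (c * b) * T v" using c ab by (simp add: algebra_simps)
      thus "x \<in> ln v" unfolding ln_def using c ab sfmult[OF F] by blast
    qed
  qed
  have spread: "line_spread F S"
    unfolding line_spread_def
  proof (intro conjI allI impI ballI)
    fix l assume "l \<in> S" thus "is_line F l" by (rule lines)
  next
    fix P assume "is_point F P"
    then obtain z where z: "z \<noteq> 0" "P = mults F z" unfolding is_point_def by auto
    show "\<exists>!l. l \<in> S \<and> P \<subseteq> l"
    proof (rule ex1I[of _ "ln z"])
      show "ln z \<in> S \<and> P \<subseteq> ln z" using z self multsF_sub unfolding S_def by auto
    next
      fix l assume "l \<in> S \<and> P \<subseteq> l"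
      then obtain v where v: "v \<noteq> 0" "l = ln v" "z \<in> ln v" using z multsF_sub unfolding S_def by auto
      thus "l = ln z" using same[OF v(1) v(3) z(1)] by simp
    qed
  qed
  have scat: "scattered_line F M l" if "l \<in> S" for l
    unfolding scattered_line_def
  proof (intro allI impI)
    fix E P Q
    assume E: "desarg_elem M E"
      and PQ: "is_point F P \<and> P \<subseteq> l \<and> P \<subseteq> E \<and> is_point F Q \<and> Q \<subseteq> l \<and> Q \<subseteq> E"
    obtain v where v: "v \<noteq> 0" "l = ln v" using \<open>l \<in> S\<close> unfolding S_def by auto
    obtain z0 where z0: "z0 \<noteq> 0" "E = mults M z0" using E unfolding desarg_elem_def by auto
    obtain p where p: "p \<noteq> 0" "P = mults F p" using PQ unfolding is_point_def by auto
    obtain p' where p': "p' \<noteq> 0" "Q = mults F p'" using PQ unfolding is_point_def by auto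
    have pl: "p \<in> ln v" "p' \<in> ln v" using PQ p p' v multsF_sub by auto
    have "p \<in> E" "p' \<in> E" using PQ p p' sf1[OF F] unfolding mults_def by force+
    then obtain m m' where m: "m \<in> M" "p = m * z0" and m': "m' \<in> M" "p' = m' * z0"
      using z0 unfolding mults_def by auto
    have lp: "ln p = ln v" using same[OF v(1) pl(1) p(1)] .
    have "p' \<in> ln p" using lp pl(2) by simp
    then obtain a b where ab: "a \<in> F" "b \<in> F" "p' = a * p + b * T p" unfolding ln_def by blast
    have mne: "m \<noteq> 0" using m p by auto
    have b0: "b = 0"
    proof (rule ccontr)
      assume bne: "b \<noteq> 0"
      have "p' = (m' / m) * p" using m m' mne by simp
      hence "T p = ((m' / m - a) / b) * p" using ab bne by (simp add: field_simps)
      moreover have "(m' / m - a) / b \<in> M"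
        using m m' ab FM by (simp add: sfdiv[OF M] sfdiff[OF M] subsetD)
      ultimately show False using noeig p(1) by blast
    qed
    hence p'a: "p' = a * p" using ab by simp
    hence ane: "a \<noteq> 0" using p' by auto
    show "P = Q"
    proof
      show "Q \<subseteq> P"
      proof
        fix x assume "x \<in> Q"
        then obtain c where c: "c \<in> F" "x = c * p'" using p' unfolding mults_def by auto
        have "x = (c * a) * p" using c p'a by simp
        moreover have "c * a \<in> F" using c ab sfmult[OF F] by blast
        ultimately show "x \<in> P" using p unfolding mults_def by blast
      qed
      show "P \<subseteq> Q"
      proof
        fix x assume "x \<in> P"
        then obtain c where c: "c \<in> F" "x = c * p" using p unfolding mults_def by auto
        have "x = (c / a) * p'" using c p'a ane by simp
        moreover have "c / a \<in> F" using c ab sfdiv[OF F] by blast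
        ultimately show "x \<in> Q" using p' unfolding mults_def by blast
      qed
    qed
  qed
  show ?thesis using spread scat by blast
qed



lemma exists_irred:
  fixes F :: "'a::field set"
  assumes F: "is_subfield F" and fin: "finite F"
  shows "\<exists>t\<in>F. \<exists>s\<in>F. \<forall>a\<in>F. a * a - t * a - s \<noteq> 0"
proof -
  define h where "h = (\<lambda>(x::'a, y::'a). (x + y, - (x * y)))"
  have "\<not> inj_on h (F \<times> F)"
  proof
    assume "inj_on h (F \<times> F)"
    moreover have "h (0, 1) = h (1, 0)" by (simp add: h_def)
    moreover have "(0::'a, 1::'a) \<in> F \<times> F" "(1::'a, 0::'a) \<in> F \<times> F" using sf0[OF F] sf1[OF F] by auto
    ultimately have "(0::'a, 1::'a) = (1, 0)" by (rule inj_onD)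
    thus False by simp
  qed
  moreover have finFF: "finite (F \<times> F)" using fin by simp
  ultimately have "card (h ` (F \<times> F)) \<noteq> card (F \<times> F)" using inj_on_iff_eq_card[OF finFF, of h] by simp
  have "\<not> F \<times> F \<subseteq> h ` (F \<times> F)"
  proof
    assume "F \<times> F \<subseteq> h ` (F \<times> F)"
    hence "card (F \<times> F) \<le> card (h ` (F \<times> F))" by (intro card_mono) (use fin in auto)
    moreover have "card (h ` (F \<times> F)) \<le> card (F \<times> F)" by (rule card_image_le) (use fin in auto)
    ultimately show False using \<open>card (h ` (F \<times> F)) \<noteq> card (F \<times> F)\<close> by linarith
  qed
  then obtain t s where ts: "t \<in> F" "s \<in> F" "(t, s) \<notin> h ` (F \<times> F)" by auto
  have "\<forall>a\<in>F. a * a - t * a - s \<noteq> 0"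
  proof (intro ballI notI)
    fix a assume a: "a \<in> F" "a * a - t * a - s = 0"
    have "t - a \<in> F" using a ts sfdiff[OF F] by blast
    moreover have "h (a, t - a) = (t, s)" using a(2) by (simp add: h_def algebra_simps)
    ultimately show False using ts a by (metis SigmaI image_eqI)
  qed
  thus ?thesis using ts by blast
qed



theorem construct:
  fixes F M :: "'a::{field,finite} set" and q n :: nat
  assumes F: "is_subfield F" and M: "is_subfield M" and FM: "F \<subseteq> M"
    and cardF: "card F = q" and cardM: "card M = q ^ n" and cardU: "card (UNIV :: 'a set) = q ^ (2 * n)"
    and n: "n > 1"
  shows "\<exists>S. line_spread F S \<and> (\<forall>l\<in>S. scattered_line F M l)"
proof -
  have finF: "finite F" and finM: "finite M" by simp_all
  have q2: "q \<ge> 2"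
  proof -
    have "{0, 1} \<subseteq> F" using sf0[OF F] sf1[OF F] by auto
    hence "card {0::'a, 1} \<le> card F" by (intro card_mono) auto
    thus ?thesis using cardF by simp
  qed
  obtain e where e: "card F = CHAR('a) ^ e" using addsub_card_power[OF sf_addsub[OF F]] by blast
  define Q' where "Q' = q ^ (n - 1)"
  have padd: "(x + y) ^ (q ^ j) = x ^ (q ^ j) + y ^ (q ^ j)" for x y :: 'a and j
    using frob_add[OF e, of x y j] cardF by simp
  have pneg: "(- x) ^ (q ^ j) = - (x ^ (q ^ j))" for x :: 'a and j
  proof -
    have "x ^ (q ^ j) + (- x) ^ (q ^ j) = (x + - x) ^ (q ^ j)" by (simp only: padd)
    also have "\<dots> = 0" using q2 by simp
    finally show ?thesis by (simp add: add_eq_0_iff)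
  qed
  have pdiff: "(x - y) ^ (q ^ j) = x ^ (q ^ j) - y ^ (q ^ j)" for x y :: 'a and j
    using padd[of x "- y" j] pneg[of y j] by simp
  have tadd: "(x + y) ^ q = x ^ q + y ^ q" for x y :: 'a using padd[of x y 1] by simp
  have tdiff: "(x - y) ^ q = x ^ q - y ^ q" for x y :: 'a using pdiff[of x y 1] by simp
  have sadd: "(x + y) ^ Q' = x ^ Q' + y ^ Q'" for x y :: 'a unfolding Q'_def by (rule padd)
  have sdiff: "(x - y) ^ Q' = x ^ Q' - y ^ Q'" for x y :: 'a unfolding Q'_def by (rule pdiff)
  have Ffix: "f ^ (q ^ j) = f" if "f \<in> F" for f j
    using sf_power_card_iter[OF F finF that, of j] cardF by simp
  have Ftfix: "f ^ q = f" if "f \<in> F" for f using Ffix[OF that, of 1] by simp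
  have Fsfix: "f ^ Q' = f" if "f \<in> F" for f unfolding Q'_def using Ffix[OF that] .
  have qQ: "q * Q' = q ^ n" unfolding Q'_def using n
    by (metis Suc_diff_1 less_trans zero_less_one power_Suc)
  have Mfix: "x ^ (q ^ n) = x" if "x \<in> M" for x
    using sf_power_card[OF M finM that] cardM by simp
  have ts_id: "(x ^ q) ^ Q' = x" if "x \<in> M" for x
    using Mfix[OF that] qQ by (simp flip: power_mult)
  have st_id: "(x ^ Q') ^ q = x" if "x \<in> M" for x
    using Mfix[OF that] qQ by (simp flip: power_mult add: mult.commute)
  have fixF: "x \<in> F" if "x ^ q = x" for x
    using fix_in_sf[OF F] q2 cardF that by simp
  have Mpow: "x ^ k \<in> M" if "x \<in> M" for x k using sfpow[OF M that] .
  obtain t s where tF: "t \<in> F" and sF: "s \<in> F" and irr: "\<And>a. a \<in> F \<Longrightarrow> a * a - t * a - s \<noteq> 0"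
    using exists_irred[OF F finF] by blast
  have tM: "t \<in> M" and sM: "s \<in> M" using tF sF FM by auto
  define g where "g X = (s - X * X ^ q + t * X) / (X - X ^ q)" for X
  define Bad where "Bad = {a \<in> M. \<exists>X\<in>M. X * X ^ q - a * X ^ q + (a - t) * X = s}"
  have Bad_sub: "Bad \<subseteq> g ` (M - F)"
  proof
    fix a assume "a \<in> Bad"
    then obtain X where X: "X \<in> M" "X * X ^ q - a * X ^ q + (a - t) * X = s" unfolding Bad_def by blast
    show "a \<in> g ` (M - F)"
    proof (cases "X \<in> F")
      case True
      hence "X ^ q = X" by (rule Ftfix)
      hence "X * X - t * X - s = 0" using X(2) by (simp add: algebra_simps)
      with irr True show ?thesis by blast
    next
      case False
      hence ne: "X - X ^ q \<noteq> 0" using fixF by auto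
      have "a * (X - X ^ q) = s - X * X ^ q + t * X"
        unfolding X(2)[symmetric] by (simp add: algebra_simps)
      hence "a = g X" using ne unfolding g_def by (simp add: field_simps)
      thus ?thesis using False X(1) by blast
    qed
  qed
  have "card Bad < card M"
  proof -
    have "card Bad \<le> card (g ` (M - F))" using Bad_sub by (intro card_mono) auto
    also have "\<dots> \<le> card (M - F)" by (rule card_image_le) simp
    also have "\<dots> = card M - card F" using FM by (simp add: card_Diff_subset)
    also have "\<dots> < card M" using cardF q2 cardM by (metis diff_less less_le_trans pos2 card_gt_0_iff finM sf0[OF M] empty_iff)
    finally show ?thesis .
  qed
  then obtain a where aM: "a \<in> M" and aBad: "a \<notin> Bad"
    by (metis card_mono finite subsetI not_le)
  have aprop: "\<And>X. X \<in> M \<Longrightarrow> X * X ^ q - a * X ^ q + (a - t) * X \<noteq> s"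
    using aM aBad unfolding Bad_def by blast
  have "card M < card (UNIV :: 'a set)" using cardM cardU q2 n
    by (simp add: power_strict_increasing)
  then obtain \<theta> :: 'a where th: "\<theta> \<notin> M"
    by (metis UNIV_I card_mono finite subsetI not_le)
  define ph where "ph = (\<lambda>(x::'a, y::'a). x + y * \<theta>)"
  have ph_inj: "inj_on ph (M \<times> M)"
  proof (rule inj_onI, clarsimp simp: ph_def)
    fix x y x' y' assume xy: "x \<in> M" "y \<in> M" "x' \<in> M" "y' \<in> M" and eq: "x + y * \<theta> = x' + y' * \<theta>"
    show "x = x' \<and> y = y'"
    proof (cases "y = y'")
      case True thus ?thesis using eq by simp
    next
      case False
      hence "\<theta> = (x' - x) / (y - y')" using eq by (simp add: field_simps)
      moreover have "(x' - x) / (y - y') \<in> M" using xy by (simp add: sfdiv[OF M] sfdiff[OF M])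
      ultimately show ?thesis using th by simp
    qed
  qed
  have ph_surj: "ph ` (M \<times> M) = UNIV"
  proof -
    have "card (ph ` (M \<times> M)) = card (UNIV :: 'a set)"
      using card_image[OF ph_inj] cardM cardU by (simp add: card_cartesian_product power_add mult_2 flip: power_add)
    thus ?thesis by (metis card_subset_eq finite subset_UNIV)
  qed
  define co where "co z = inv_into (M \<times> M) ph z" for z
  have co_in: "co z \<in> M \<times> M" for z unfolding co_def using ph_surj by (metis UNIV_I inv_into_into)
  have co_eq: "ph (co z) = z" for z unfolding co_def using ph_surj by (metis UNIV_I f_inv_into_f)
  have co_uniq: "co (x + y * \<theta>) = (x, y)" if "x \<in> M" "y \<in> M" for x y
  proof -
    have "co (ph (x, y)) = (x, y)" unfolding co_def using that by (intro inv_into_f_f[OF ph_inj]) auto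
    thus ?thesis by (simp add: ph_def)
  qed
  define cx where "cx z = fst (co z)" for z
  define cy where "cy z = snd (co z)" for z
  have cxM: "cx z \<in> M" and cyM: "cy z \<in> M" for z using co_in[of z] by (auto simp: cx_def cy_def mem_Times_iff)
  have cdec: "z = cx z + cy z * \<theta>" for z using co_eq[of z] by (simp add: ph_def cx_def cy_def split: prod.splits)
  have cuniq: "cx (x + y * \<theta>) = x" "cy (x + y * \<theta>) = y" if "x \<in> M" "y \<in> M" for x y
    using co_uniq[OF that] by (simp_all add: cx_def cy_def)
  have dec_eq: "x = x' \<and> y = y'" if "x \<in> M" "y \<in> M" "x' \<in> M" "y' \<in> M" "x + y * \<theta> = x' + y' * \<theta>" for x y x' y'
    using cuniq[OF that(1,2)] cuniq[OF that(3,4)] that(5) by metis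
  define w where "w = s - a * a + t * a"
  define c where "c = w ^ Q'"
  define d where "d = (t - a) ^ Q'"
  have wM: "w \<in> M" unfolding w_def using aM tM sM by (simp add: sfadd[OF M] sfmult[OF M] sfdiff[OF M])
  have cM: "c \<in> M" unfolding c_def using wM Mpow by blast
  have dM: "d \<in> M" unfolding d_def using aM tM Mpow sfdiff[OF M] by blast
  define T1 where "T1 x y = a * x + y ^ q" for x y
  define T2 where "T2 x y = c * x ^ Q' + d * y" for x y
  define T where "T z = T1 (cx z) (cy z) + T2 (cx z) (cy z) * \<theta>" for z
  have T1M: "T1 x y \<in> M" if "x \<in> M" "y \<in> M" for x y
    unfolding T1_def using that aM Mpow by (simp add: sfadd[OF M] sfmult[OF M])
  have T2M: "T2 x y \<in> M" if "x \<in> M" "y \<in> M" for x y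
    unfolding T2_def using that cM dM Mpow by (simp add: sfadd[OF M] sfmult[OF M])
  have Tdec: "T (x + y * \<theta>) = T1 x y + T2 x y * \<theta>" if "x \<in> M" "y \<in> M" for x y
    unfolding T_def using cuniq[OF that] by simp
  have T1add: "T1 (x + x') (y + y') = T1 x y + T1 x' y'" for x y x' y'
    unfolding T1_def by (simp add: tadd algebra_simps)
  have T2add: "T2 (x + x') (y + y') = T2 x y + T2 x' y'" for x y x' y'
    unfolding T2_def by (simp add: sadd algebra_simps)
  have Tadd: "T (u + v) = T u + T v" for u v
  proof -
    have "u + v = (cx u + cx v) + (cy u + cy v) * \<theta>"
      using cdec[of u] cdec[of v] by (simp add: algebra_simps)
    hence "T (u + v) = T1 (cx u + cx v) (cy u + cy v) + T2 (cx u + cx v) (cy u + cy v) * \<theta>"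
      using Tdec cxM cyM sfadd[OF M] by metis
    thus ?thesis unfolding T1add T2add T_def by (simp add: algebra_simps)
  qed
  have Thom: "T (f * u) = f * T u" if f: "f \<in> F" for f u
  proof -
    have fM: "f \<in> M" using f FM by auto
    have "f * u = f * (cx u + cy u * \<theta>)" by (rule arg_cong[OF cdec])
    also have "\<dots> = (f * cx u) + (f * cy u) * \<theta>" by (simp add: algebra_simps)
    finally have "f * u = (f * cx u) + (f * cy u) * \<theta>" .
    hence "T (f * u) = T1 (f * cx u) (f * cy u) + T2 (f * cx u) (f * cy u) * \<theta>"
      using Tdec cxM cyM sfmult[OF M] fM by metis
    moreover have "T1 (f * x) (f * y) = f * T1 x y" for x y
      unfolding T1_def using Ftfix[OF f] by (simp add: power_mult_distrib algebra_simps)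
    moreover have "T2 (f * x) (f * y) = f * T2 x y" for x y
      unfolding T2_def using Fsfix[OF f] by (simp add: power_mult_distrib algebra_simps)
    ultimately show ?thesis unfolding T_def by (simp add: algebra_simps)
  qed
  have cq: "c ^ q = w" unfolding c_def using st_id[OF wM] .
  have dq: "d ^ q = t - a" unfolding d_def using st_id aM tM sfdiff[OF M] by blast
  have d_alt: "d = t - a ^ Q'" unfolding d_def sdiff using Fsfix[OF tF] by simp
  have cdd: "c + d * d = t * d + s"
  proof -
    have "c + d * d = (w + (t - a) * (t - a)) ^ Q'" unfolding c_def d_def sadd by (simp add: power_mult_distrib)
    also have "w + (t - a) * (t - a) = t * (t - a) + s" unfolding w_def by (simp add: algebra_simps)
    also have "(t * (t - a) + s) ^ Q' = t * d + s" unfolding sadd d_def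
      using Fsfix[OF tF] Fsfix[OF sF] by (simp add: power_mult_distrib)
    finally show ?thesis .
  qed
  have I1: "T1 (T1 x y) (T2 x y) = t * T1 x y + s * x" if "x \<in> M" "y \<in> M" for x y
  proof -
    have "(T2 x y) ^ q = w * x + (t - a) * y ^ q"
      unfolding T2_def tadd power_mult_distrib cq dq st_id[OF that(1)] by simp
    thus ?thesis unfolding T1_def[of "T1 x y"] by (simp add: T1_def w_def algebra_simps)
  qed
  have I2: "T2 (T1 x y) (T2 x y) = t * T2 x y + s * y" if "x \<in> M" "y \<in> M" for x y
  proof -
    have "(T1 x y) ^ Q' = a ^ Q' * x ^ Q' + y"
      unfolding T1_def sadd power_mult_distrib ts_id[OF that(2)] by simp
    hence "T2 (T1 x y) (T2 x y) = c * (a ^ Q' * x ^ Q' + y) + d * (c * x ^ Q' + d * y)"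
      unfolding T2_def[of "T1 x y"] by (simp add: T2_def)
    also have "\<dots> = (c * a ^ Q' + d * c) * x ^ Q' + (c + d * d) * y" by (simp add: algebra_simps)
    also have "c * a ^ Q' + d * c = t * c" unfolding d_alt by (simp add: algebra_simps)
    also note cdd
    finally show ?thesis unfolding T2_def by (simp add: algebra_simps)
  qed
  have Tsq: "T (T u) = t * T u + s * u" for u
  proof -
    have "T (T u) = T1 (T1 (cx u) (cy u)) (T2 (cx u) (cy u)) + T2 (T1 (cx u) (cy u)) (T2 (cx u) (cy u)) * \<theta>"
      unfolding T_def[of u] using Tdec T1M T2M cxM cyM by metis
    also have "\<dots> = t * T u + s * (cx u + cy u * \<theta>)"
      unfolding I1[OF cxM cyM] I2[OF cxM cyM] T_def by (simp add: algebra_simps)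
    finally show ?thesis using cdec[of u] by simp
  qed
  have noeig: "T u \<noteq> m * u" if m: "m \<in> M" and u: "u \<noteq> 0" for m u
  proof
    assume eq: "T u = m * u"
    define x where "x = cx u"
    define y where "y = cy u"
    have xM: "x \<in> M" and yM: "y \<in> M" using cxM cyM by (simp_all add: x_def y_def)
    have "m * u = m * (x + y * \<theta>)" unfolding x_def y_def by (rule arg_cong[OF cdec])
    hence "T1 x y + T2 x y * \<theta> = (m * x) + (m * y) * \<theta>"
      using eq unfolding T_def x_def y_def by (simp add: algebra_simps)
    hence e1: "T1 x y = m * x" and e2: "T2 x y = m * y"
      using dec_eq[OF T1M[OF xM yM] T2M[OF xM yM]] xM yM m sfmult[OF M] by blast+
    have yq: "y ^ q = (m - a) * x" using e1 unfolding T1_def by (simp add: algebra_simps)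
    have ydef: "y = (m - a) ^ Q' * x ^ Q'"
      using ts_id[OF yM] unfolding yq by (simp add: power_mult_distrib)
    have x0: "x \<noteq> 0"
    proof
      assume "x = 0"
      hence "y = 0" using ydef n q2 by (simp add: Q'_def)
      thus False using \<open>x = 0\<close> u cdec[of u] unfolding x_def y_def by simp
    qed
    have "c * x ^ Q' = (m - d) * y" using e2 unfolding T2_def by (simp add: algebra_simps)
    also have "\<dots> = ((m - d) * (m - a) ^ Q') * x ^ Q'" unfolding ydef by (simp add: algebra_simps)
    finally have "c = (m - d) * (m - a) ^ Q'" using x0 by simp
    hence "c ^ q = (m ^ q - d ^ q) * ((m - a) ^ Q') ^ q" by (simp add: power_mult_distrib tdiff)
    hence "w = (m ^ q - (t - a)) * (m - a)" unfolding cq dq using st_id m aM sfdiff[OF M] by metis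
    hence "m * m ^ q - a * m ^ q + (a - t) * m = s" unfolding w_def by (simp add: algebra_simps)
    thus False using aprop[OF m] by blast
  qed
  show ?thesis
    by (rule spread_from_T[OF F M FM tF sF Tadd Thom Tsq irr noeig])
qed



theorem mainTheorem10:
  fixes F M :: "'a::{field,finite} set" and q n :: nat
  assumes "is_subfield F" and "is_subfield M" and "F \<subseteq> M"
    and "card F = q" and "card M = q ^ n" and "card (UNIV :: 'a set) = q ^ (2 * n)"
    and "n > 1" and "even n"
  shows "\<exists>S. line_spread F S \<and> (\<forall>l\<in>S. scattered_line F M l)"
  using construct[OF assms(1-7)] .

end
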